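(* Under the hypotheses of the previous proposition (Assumption (A), $q\in[0,1)$, $l\ge0$, $S_H>0$, positive epidemiological parameters, $\hat R_e h(p(0),q)>1$, $n=1$, and existence of an equilibrium of (O) with $I_H^*>0$), if $\gamma\ge\mu$ then this equilibrium is locally asymptotically stable for every $k>0$.
   Context: Assumption (A): $a,w:[0,\infty)\to(0,\infty)$ are continuously differentiable with $a'(x)>0$ and $w'(x)\le0$ for all $x\ge0$. Let $c(p,q):=1-p(1-q)$, $p(x):=a(x)/(a(x)+w(x))$, $h(p,q):=c(p,q)/(c(p,q)+l)$, $f(x):=h(p(x),q)$, and $\hat R_e:=\sqrt{\frac{\beta_{H\leftarrow M}\beta_{M\leftarrow H}}{\gamma\mu}\rho S_H}$. For $n=1$, system (O) is, with $S_H>0$ fixed, $$\dot I_H=\beta_{H\leftarrow M}\rho S_H f(J)I_M-\gamma I_H,\qquad \dot I_M=\beta_{M\leftarrow H}f(J)I_H-\mu I_M,\qquad \dot J=kI_H-kJ.$$ *)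

theory Defs
  imports "HOL-Analysis.Analysis"
begin

definition c_fun :: "real \<Rightarrow> real \<Rightarrow> real" where
  "c_fun p q = 1 - p * (1 - q)"

definition p_fun :: "(real \<Rightarrow> real) \<Rightarrow> (real \<Rightarrow> real) \<Rightarrow> real \<Rightarrow> real" where
  "p_fun a w x = a x / (a x + w x)"

definition h_fun :: "real \<Rightarrow> real \<Rightarrow> real \<Rightarrow> real" where
  "h_fun l p q = c_fun p q / (c_fun p q + l)"

definition f_fun :: "(real \<Rightarrow> real) \<Rightarrow> (real \<Rightarrow> real) \<Rightarrow> real \<Rightarrow> real \<Rightarrow> real \<Rightarrow> real" where
  "f_fun a w q l x = h_fun l (p_fun a w x) q"

definition Re_hat :: "real \<Rightarrow> real \<Rightarrow> real \<Rightarrow> real \<Rightarrow> real \<Rightarrow> real \<Rightarrow> real" where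
  "Re_hat bHM bMH gam mu rho SH = sqrt (bHM * bMH / (gam * mu) * rho * SH)"

definition rhsO ::
  "(real \<Rightarrow> real) \<Rightarrow> (real \<Rightarrow> real) \<Rightarrow> real \<Rightarrow> real \<Rightarrow> real \<Rightarrow> real \<Rightarrow> real \<Rightarrow> real
   \<Rightarrow> real \<Rightarrow> real \<Rightarrow> real \<Rightarrow> real \<times> real \<times> real \<Rightarrow> real \<times> real \<times> real" where
  "rhsO a w q l bHM bMH gam mu rho SH k = (\<lambda>(IH, IM, J).
     (bHM * rho * SH * f_fun a w q l J * IM - gam * IH,
      bMH * f_fun a w q l J * IH - mu * IM,
      k * IH - k * J))"

definition loc_asym_stable :: "('v::real_normed_vector \<Rightarrow> 'v) \<Rightarrow> 'v \<Rightarrow> bool" where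
  "loc_asym_stable F e \<longleftrightarrow>
     (\<forall>\<epsilon>>0. \<exists>\<delta>>0. \<forall>x::real \<Rightarrow> 'v.
        ((\<forall>t\<ge>0. (x has_vector_derivative F (x t)) (at t within {0..})) \<and> dist (x 0) e < \<delta>)
        \<longrightarrow> (\<forall>t\<ge>0. dist (x t) e < \<epsilon>)) \<and>
     (\<exists>\<delta>>0. \<forall>x::real \<Rightarrow> 'v.
        ((\<forall>t\<ge>0. (x has_vector_derivative F (x t)) (at t within {0..})) \<and> dist (x 0) e < \<delta>)
        \<longrightarrow> (x \<longlongrightarrow> e) at_top)"

end

theory Submission
  imports Defs "HOL-Real_Asymp.Real_Asymp"
begin


lemma lyap_decay:
  fixes F :: "'v::real_normed_vector \<Rightarrow> 'v" and V :: "'v \<Rightarrow> real" and DV :: "'v \<Rightarrow> 'v \<Rightarrow> real"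
    and x :: "real \<Rightarrow> 'v"
  assumes Vd: "\<And>p. (V has_derivative DV p) (at p)"
    and Vlow: "\<And>p. \<kappa> * (dist p e)^2 \<le> V p" and \<kappa>: "\<kappa> > 0"
    and dec: "\<And>p. dist p e < R \<Longrightarrow> DV p (F p) \<le> - c * V p" and c: "c > 0" and Rpos: "R > 0"
    and sol: "\<forall>t\<ge>0. (x has_vector_derivative F (x t)) (at t within {0..})"
    and x0: "V (x 0) < \<kappa> * R^2"
  shows "\<forall>t\<ge>0. V (x t) \<le> V (x 0) * exp (- c * t)"
proof -
  define \<psi> where "\<psi> t = V (x t) * exp (c * t)" for t
  have dVx: "((\<lambda>s. V (x s)) has_real_derivative DV (x t) (F (x t))) (at t within {0..})"
    if t: "t \<ge> 0" for t
  proof -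
    have "(x has_derivative (\<lambda>h. h *\<^sub>R F (x t))) (at t within {0..})"
      using sol t by (simp add: has_vector_derivative_def)
    from has_derivative_compose[OF this Vd]
    have "((\<lambda>s. V (x s)) has_derivative (\<lambda>h. DV (x t) (h *\<^sub>R F (x t)))) (at t within {0..})" .
    moreover have "bounded_linear (DV (x t))" using Vd has_derivative_bounded_linear by blast
    then have "(\<lambda>h. DV (x t) (h *\<^sub>R F (x t))) = (\<lambda>h. DV (x t) (F (x t)) * h)"
      by (simp add: linear_simps mult.commute)
    ultimately show ?thesis by (simp add: has_field_derivative_def)
  qed
  have dpsi: "(\<psi> has_real_derivative (DV (x t) (F (x t)) * exp (c * t) + V (x t) * (exp (c * t) * c))) (at t within {0..})"
    if t: "t \<ge> 0" for t
    unfolding \<psi>_def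
    by (rule derivative_eq_intros dVx[OF t] | simp)+
  have cont: "continuous_on {0..} \<psi>"
    using dpsi by (meson DERIV_continuous atLeast_iff continuous_on_eq_continuous_within)
  have mono: "\<psi> T \<le> \<psi> 0" if T: "T \<ge> 0" and near: "\<And>s. 0 < s \<Longrightarrow> s < T \<Longrightarrow> dist (x s) e < R" for T
  proof -
    have "\<psi> T \<le> \<psi> 0"
    proof (rule DERIV_nonpos_imp_decreasing_open[OF T])
      fix s assume s: "0 < s" "s < T"
      have "at s within {0..} = at s"
        by (rule at_within_interior) (use s in auto)
      then have d: "(\<psi> has_real_derivative (DV (x s) (F (x s)) * exp (c * s) + V (x s) * (exp (c * s) * c))) (at s)"
        using dpsi[of s] s by simp
      have "DV (x s) (F (x s)) \<le> - c * V (x s)" using dec near s by blast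
      then have "DV (x s) (F (x s)) * exp (c * s) + V (x s) * (exp (c * s) * c) \<le> 0"
        using mult_right_mono[of "DV (x s) (F (x s))" "- c * V (x s)" "exp (c * s)"]
        by (simp add: algebra_simps)
      then show "\<exists>y. (\<psi> has_real_derivative y) (at s) \<and> y \<le> 0" using d by blast
    next
      show "continuous_on {0..T} \<psi>" using cont by (rule continuous_on_subset) auto
    qed
    then show ?thesis .
  qed
  have distR: "dist p e < R" if "V p < \<kappa> * R^2" for p
  proof -
    have "\<kappa> * (dist p e)^2 < \<kappa> * R^2" using Vlow[of p] that by linarith
    then have "(dist p e)^2 < R^2" using \<kappa> by simp
    then show ?thesis using Rpos by (simp add: power_less_imp_less_base)
  qed
  have allR: "V (x t) < \<kappa> * R^2" if t: "t \<ge> 0" for t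
  proof (rule ccontr)
    assume "\<not> V (x t) < \<kappa> * R^2"
    define S where "S = {0..t} \<inter> (\<lambda>s. V (x s)) -` {\<kappa> * R^2..}"
    have cVx: "continuous_on {0..t} (\<lambda>s. V (x s))"
      using dVx by (meson DERIV_continuous atLeastAtMost_iff continuous_on_eq_continuous_within
          continuous_within_subset subsetI atLeast_iff)
    have "closed S" unfolding S_def by (rule continuous_closed_preimage[OF cVx]) auto
    moreover have "t \<in> S" using t \<open>\<not> V (x t) < \<kappa> * R^2\<close> by (auto simp: S_def)
    moreover have "bdd_below S" unfolding S_def by (auto intro: bdd_belowI[of _ 0])
    ultimately have TS: "Inf S \<in> S" using closed_contains_Inf by blast
    define T where "T = Inf S"
    have T0: "T \<ge> 0" using TS by (auto simp: S_def T_def)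
    have near: "dist (x s) e < R" if s: "0 < s" "s < T" for s
    proof -
      have "s \<notin> S"
      proof
        assume "s \<in> S"
        then have "T \<le> s" unfolding T_def using \<open>bdd_below S\<close> by (rule cInf_lower)
        then show False using s by simp
      qed
      moreover have "T \<le> t" using TS by (auto simp: S_def T_def)
      ultimately have "V (x s) < \<kappa> * R^2" using s by (auto simp: S_def)
      then show ?thesis by (rule distR)
    qed
    have "\<psi> T \<le> \<psi> 0" using mono[OF T0 near] by blast
    then have "V (x T) * exp (c * T) \<le> V (x 0)" by (simp add: \<psi>_def)
    moreover have "V (x T) \<ge> \<kappa> * R^2" using TS by (auto simp: S_def T_def)
    moreover have "exp (c * T) \<ge> 1" using c T0 by simp
    moreover have "\<kappa> * R^2 > 0" using \<kappa> Rpos by simp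
    ultimately have "V (x T) \<le> V (x 0)"
      by (smt (verit) mult_le_cancel_left1)
    then show False using x0 \<open>V (x T) \<ge> \<kappa> * R^2\<close> by linarith
  qed
  show ?thesis
  proof (intro allI impI)
    fix t :: real assume t: "t \<ge> 0"
    have "\<psi> t \<le> \<psi> 0" by (rule mono[OF t]) (use allR distR in auto)
    then have "V (x t) * exp (c * t) \<le> V (x 0)" by (simp add: \<psi>_def)
    then have "V (x t) * exp (c * t) * exp (- c * t) \<le> V (x 0) * exp (- c * t)"
      by (rule mult_right_mono) simp
    moreover have "V (x t) * exp (c * t) * exp (- c * t) = V (x t)"
      by (simp add: exp_minus field_simps)
    ultimately show "V (x t) \<le> V (x 0) * exp (- c * t)" by linarith
  qed
qed

lemma lyap_las:
  fixes F :: "'v::real_normed_vector \<Rightarrow> 'v" and V :: "'v \<Rightarrow> real" and DV :: "'v \<Rightarrow> 'v \<Rightarrow> real"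
  assumes Vd: "\<And>p. (V has_derivative DV p) (at p)"
    and Vlow: "\<And>p. \<kappa> * (dist p e)^2 \<le> V p" and \<kappa>: "\<kappa> > 0"
    and dec: "\<And>p. dist p e < R \<Longrightarrow> DV p (F p) \<le> - c * V p" and c: "c > 0" and Rpos: "R > 0"
    and Ve: "V e = 0"
  shows "loc_asym_stable F e"
proof -
  have Vnn: "V p \<ge> 0" for p using Vlow[of p] \<kappa> by (smt (verit) zero_le_mult_iff zero_le_power2)
  have "isCont V e" using Vd has_derivative_continuous by blast
  then have Vc: "\<exists>\<delta>>0. \<forall>p. dist p e < \<delta> \<longrightarrow> V p < \<eta>" if "\<eta> > 0" for \<eta>
    using that Ve unfolding continuous_at_eps_delta by (metis dist_real_def abs_less_iff diff_zero)
  have small: "dist p e < m" if "V p < \<kappa> * m^2" "m > 0" for p m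
  proof -
    have "\<kappa> * (dist p e)^2 < \<kappa> * m^2" using Vlow[of p] that by linarith
    then have "(dist p e)^2 < m^2" using \<kappa> by simp
    then show ?thesis using that by (simp add: power_less_imp_less_base)
  qed
  have exp_le: "V (x 0) * exp (- c * t) \<le> V (x 0)" if "t \<ge> 0" for x :: "real \<Rightarrow> 'v" and t
    using Vnn[of "x 0"] that c by (simp add: mult_left_le)
  show ?thesis
    unfolding loc_asym_stable_def
  proof (intro conjI allI impI)
    fix \<epsilon> :: real assume \<epsilon>: "\<epsilon> > 0"
    define m where "m = min \<epsilon> R"
    have m: "m > 0" "m \<le> \<epsilon>" "m \<le> R" using \<epsilon> Rpos by (auto simp: m_def)
    then have "\<kappa> * m^2 > 0" using \<kappa> by simp
    then obtain \<delta> where \<delta>: "\<delta> > 0" "\<And>p. dist p e < \<delta> \<Longrightarrow> V p < \<kappa> * m^2" using Vc by blast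
    show "\<exists>\<delta>>0. \<forall>x::real \<Rightarrow> 'v. ((\<forall>t\<ge>0. (x has_vector_derivative F (x t)) (at t within {0..})) \<and> dist (x 0) e < \<delta>)
        \<longrightarrow> (\<forall>t\<ge>0. dist (x t) e < \<epsilon>)"
    proof (intro exI[of _ \<delta>] conjI allI impI)
      fix x :: "real \<Rightarrow> 'v" and t :: real
      assume H: "(\<forall>t\<ge>0. (x has_vector_derivative F (x t)) (at t within {0..})) \<and> dist (x 0) e < \<delta>"
        and t: "t \<ge> 0"
      have x0: "V (x 0) < \<kappa> * m^2" using H \<delta> by blast
      have "\<kappa> * m^2 \<le> \<kappa> * R^2" using m \<kappa> by (simp add: power_mono)
      then have "\<forall>t\<ge>0. V (x t) \<le> V (x 0) * exp (- c * t)"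
        using lyap_decay[OF Vd Vlow \<kappa> dec c Rpos] H x0 by force
      then have "V (x t) < \<kappa> * m^2" using exp_le[of t x] t x0 by force
      then have "dist (x t) e < m" using small m by blast
      then show "dist (x t) e < \<epsilon>" using m by linarith
    qed (rule \<delta>(1))
  next
    have "\<kappa> * R^2 > 0" using \<kappa> Rpos by simp
    then obtain \<delta> where \<delta>: "\<delta> > 0" "\<And>p. dist p e < \<delta> \<Longrightarrow> V p < \<kappa> * R^2" using Vc by blast
    show "\<exists>\<delta>>0. \<forall>x::real \<Rightarrow> 'v. ((\<forall>t\<ge>0. (x has_vector_derivative F (x t)) (at t within {0..})) \<and> dist (x 0) e < \<delta>)
        \<longrightarrow> (x \<longlongrightarrow> e) at_top"
    proof (intro exI[of _ \<delta>] conjI allI impI)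
      fix x :: "real \<Rightarrow> 'v"
      assume H: "(\<forall>t\<ge>0. (x has_vector_derivative F (x t)) (at t within {0..})) \<and> dist (x 0) e < \<delta>"
      have x0: "V (x 0) < \<kappa> * R^2" using H \<delta> by blast
      have dec': "\<forall>t\<ge>0. V (x t) \<le> V (x 0) * exp (- c * t)"
        using lyap_decay[OF Vd Vlow \<kappa> dec c Rpos] H x0 by force
      have bnd: "dist (x t) e \<le> sqrt (V (x 0) / \<kappa> * exp (- c * t))" if t: "t \<ge> 0" for t
      proof -
        have "\<kappa> * (dist (x t) e)^2 \<le> V (x 0) * exp (- c * t)" using Vlow[of "x t"] dec' t by force
        then have "(dist (x t) e)^2 \<le> V (x 0) / \<kappa> * exp (- c * t)" using \<kappa>
          by (simp add: field_simps)
        then show ?thesis by (metis real_le_rsqrt)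
      qed
      have lim: "((\<lambda>t. sqrt (V (x 0) / \<kappa> * exp (- c * t))) \<longlongrightarrow> 0) at_top"
      proof -
        have "((\<lambda>t. exp (- c * t)) \<longlongrightarrow> 0) at_top" using c by real_asymp
        then have "((\<lambda>t. V (x 0) / \<kappa> * exp (- c * t)) \<longlongrightarrow> 0) at_top"
          by (rule tendsto_mult_right_zero)
        then show ?thesis using tendsto_real_sqrt by force
      qed
      have "((\<lambda>t. dist (x t) e) \<longlongrightarrow> 0) at_top"
      proof (rule tendsto_sandwich[OF _ _ tendsto_const lim])
        show "\<forall>\<^sub>F t in at_top. 0 \<le> dist (x t) e" by simp
        show "\<forall>\<^sub>F t in at_top. dist (x t) e \<le> sqrt (V (x 0) / \<kappa> * exp (- c * t))"
          using eventually_ge_at_top[of 0] by (rule eventually_mono) (rule bnd)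
      qed
      then show "(x \<longlongrightarrow> e) at_top" by (rule tendsto_dist_iff[THEN iffD2])
    qed (rule \<delta>(1))
  qed
qed



lemma sq_ineq: "2 * (x::real) * y \<le> x^2 + y^2"
  using sum_squares_bound by blast

lemma lyap_lin:
  fixes b d s k e1 e2 lam eps sg D j :: real
  assumes b: "b > 0" and d: "d \<ge> 0" and s: "s > 0" and k: "k > 0" and e1: "e1 > 0" and e2: "e2 > 0"
    and e2k: "e2 < k" and lam: "lam = e2 / (d + s)" and eps: "eps > 0"
    and eps1: "eps * (2 * b + 2 * k^2/e1) \<le> k/2" and eps2: "2 * eps * e2^2/e1 \<le> lam * s/2"
  shows "2 * (e1/b) * sg * (-b * j) + 2 * j * (e1 * sg + e2 * D - k * j) + 2 * lam * D * (-s * D - d * j)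
        - 2 * eps * ((-b * j) * j + sg * (e1 * sg + e2 * D - k * j))
      \<le> - (eps * e1) * sg^2 - (k/2) * j^2 - (lam * s/2) * D^2"
proof -
  have lamd: "e2 - lam * d = lam * s" using lam d s by (simp add: field_simps)
  have lampos: "lam > 0" using lam d s e2 by simp
  have "lam * d \<ge> 0" using lampos d by simp
  then have lams: "lam * s \<le> e2" using lamd by linarith
  have id: "2 * (e1/b) * sg * (-b * j) + 2 * j * (e1 * sg + e2 * D - k * j) + 2 * lam * D * (-s * D - d * j)
        - 2 * eps * ((-b * j) * j + sg * (e1 * sg + e2 * D - k * j))
      = -2 * eps * e1 * sg^2 - 2 * k * j^2 + 2 * eps * b * j^2 - 2 * lam * s * D^2 + 2 * (e2 - lam * d) * j * D
        - 2 * eps * e2 * sg * D + 2 * eps * k * sg * j"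
    using b by (simp add: field_simps power2_eq_square)
  have F1: "2 * (lam * s) * j * D \<le> (lam * s) * (j^2 + D^2)"
    using mult_left_mono[OF sq_ineq[of j D], of "lam * s"] lampos s by (simp add: algebra_simps)
  have G2: "0 \<le> (e1/2) * (sg + (2 * e2/e1) * D)^2" using e1 by simp
  have F2: "- 2 * eps * e2 * sg * D \<le> eps * (e1 * sg^2/2 + 2 * e2^2 * D^2/e1)"
  proof -
    have "(e1/2) * (sg + (2 * e2/e1) * D)^2 = e1 * sg^2/2 + 2 * e2 * sg * D + 2 * e2^2 * D^2/e1"
      using e1 by (simp add: field_simps power2_eq_square)
    then have "- 2 * e2 * sg * D \<le> e1 * sg^2/2 + 2 * e2^2 * D^2/e1" using G2 by linarith
    from mult_left_mono[OF this, of eps] eps show ?thesis by (simp add: algebra_simps)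
  qed
  have G3: "0 \<le> (e1/2) * (sg - (2 * k/e1) * j)^2" using e1 by simp
  have F3: "2 * eps * k * sg * j \<le> eps * (e1 * sg^2/2 + 2 * k^2 * j^2/e1)"
  proof -
    have "(e1/2) * (sg - (2 * k/e1) * j)^2 = e1 * sg^2/2 - 2 * k * sg * j + 2 * k^2 * j^2/e1"
      using e1 by (simp add: field_simps power2_eq_square)
    then have "2 * k * sg * j \<le> e1 * sg^2/2 + 2 * k^2 * j^2/e1" using G3 by linarith
    from mult_left_mono[OF this, of eps] eps show ?thesis by (simp add: algebra_simps)
  qed
  have F4: "(eps * (2 * b + 2 * k^2/e1)) * j^2 \<le> (k/2) * j^2"
    by (rule mult_right_mono[OF eps1]) simp
  have F5: "(2 * eps * e2^2/e1) * D^2 \<le> (lam * s/2) * D^2"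
    by (rule mult_right_mono[OF eps2]) simp
  have F6: "(lam * s) * j^2 \<le> k * j^2"
    by (rule mult_right_mono) (use lams e2k in auto)
  have comb: "(- (eps * e1) * sg^2 - (k/2) * j^2 - (lam * s/2) * D^2) -
      (-2 * eps * e1 * sg^2 - 2 * k * j^2 + 2 * eps * b * j^2 - 2 * lam * s * D^2 + 2 * (lam * s) * j * D
        - 2 * eps * e2 * sg * D + 2 * eps * k * sg * j)
    = ((lam * s) * (j^2 + D^2) - 2 * (lam * s) * j * D)
      + (eps * (e1 * sg^2/2 + 2 * e2^2 * D^2/e1) - (- 2 * eps * e2 * sg * D))
      + (eps * (e1 * sg^2/2 + 2 * k^2 * j^2/e1) - 2 * eps * k * sg * j)
      + ((k/2) * j^2 - (eps * (2 * b + 2 * k^2/e1)) * j^2)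
      + ((lam * s/2) * D^2 - (2 * eps * e2^2/e1) * D^2)
      + (k * j^2 - (lam * s) * j^2)"
    using e1 by (simp add: field_simps power2_eq_square)
  show ?thesis
    unfolding id lamd
    using F1 F2 F3 F4 F5 F6 comb by linarith
qed

lemma rem_bound:
  fixes x r j \<theta> :: real
  assumes "\<bar>r\<bar> \<le> \<theta> * \<bar>j\<bar>" "\<theta> \<ge> 0"
  shows "2 * x * r \<le> \<theta> * (x^2 + j^2)"
proof -
  have "2 * x * r \<le> 2 * \<bar>x\<bar> * \<bar>r\<bar>" by (simp add: abs_mult[symmetric] abs_le_iff mult.assoc)
  also have "\<dots> \<le> 2 * \<bar>x\<bar> * (\<theta> * \<bar>j\<bar>)" using assms by (simp add: mult_left_mono)
  also have "\<dots> = \<theta> * (2 * \<bar>x\<bar> * \<bar>j\<bar>)" by simp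
  also have "\<dots> \<le> \<theta> * (x^2 + j^2)"
    using sq_ineq[of "\<bar>x\<bar>" "\<bar>j\<bar>"] assms(2) by (simp add: mult_left_mono)
  finally show ?thesis .
qed

lemma lyap_exists:
  fixes b d s k e1 e2 :: real
  assumes b: "b > 0" and d: "d \<ge> 0" and s: "s > 0" and k: "k > 0" and e1: "e1 > 0" and e2: "e2 > 0"
    and e2k: "e2 < k"
  shows "\<exists>lam eps \<kappa> c \<theta>0. lam > 0 \<and> eps > 0 \<and> \<kappa> > 0 \<and> c > 0 \<and> \<theta>0 > 0 \<and>
    (\<forall>sg D j. \<kappa> * (sg^2 + D^2 + j^2) \<le> (e1/b) * sg^2 + j^2 + lam * D^2 - 2 * eps * sg * j) \<and>
    (\<forall>sg D j sg' D' j' r1 r2 \<theta>. sg' = -b * j + r1 \<longrightarrow> D' = -s * D - d * j + r2 \<longrightarrow>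
        j' = e1 * sg + e2 * D - k * j \<longrightarrow> \<bar>r1\<bar> \<le> \<theta> * \<bar>j\<bar> \<longrightarrow> \<bar>r2\<bar> \<le> \<theta> * \<bar>j\<bar> \<longrightarrow>
        0 \<le> \<theta> \<longrightarrow> \<theta> \<le> \<theta>0 \<longrightarrow>
        2 * (e1/b) * sg * sg' + 2 * j * j' + 2 * lam * D * D' - 2 * eps * (sg' * j + sg * j')
          \<le> - c * ((e1/b) * sg^2 + j^2 + lam * D^2 - 2 * eps * sg * j))"
proof -
  define lam where "lam = e2 / (d + s)"
  have lampos: "lam > 0" using e2 d s by (simp add: lam_def)
  define A1 where "A1 = k / (2 * (2 * b + 2 * k^2/e1))"
  define A2 where "A2 = lam * s * e1/(4 * e2^2)"
  define eps where "eps = min (min A1 A2) (min (e1/(2 * b)) (1/2))"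
  have X: "2 * b + 2 * k^2/e1 > 0" using b e1 by (simp add: add_pos_nonneg)
  have A1: "A1 > 0" using k X by (simp add: A1_def)
  have A2: "A2 > 0" using lampos s e1 e2 by (simp add: A2_def)
  have epspos: "eps > 0" using A1 A2 b e1 by (simp add: eps_def)
  have epsA1: "eps \<le> A1" and epsA2: "eps \<le> A2" and eps3: "eps \<le> e1/(2 * b)" and eps4: "eps \<le> 1/2"
    by (auto simp: eps_def)
  have eps1: "eps * (2 * b + 2 * k^2/e1) \<le> k/2"
  proof -
    have "eps * (2 * b + 2 * k^2/e1) \<le> A1 * (2 * b + 2 * k^2/e1)" using epsA1 X by (simp add: mult_right_mono)
    also have "\<dots> = k/2"
    proof -
      have gen: "k / (2 * Y) * Y = k/2" if "Y > 0" for Y :: real using that by (simp add: field_simps)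
      show ?thesis unfolding A1_def by (rule gen[OF X])
    qed
    finally show ?thesis .
  qed
  have eps2: "2 * eps * e2^2/e1 \<le> lam * s/2"
  proof -
    have "2 * eps * e2^2/e1 \<le> 2 * A2 * e2^2/e1" using epsA2 e1 e2 by (simp add: divide_right_mono mult_right_mono)
    also have "\<dots> = lam * s/2" using e1 e2 by (simp add: A2_def field_simps power2_eq_square)
    finally show ?thesis .
  qed
  define \<kappa> where "\<kappa> = min (min (e1/(2 * b)) (1/2)) lam"
  have \<kappa>pos: "\<kappa> > 0" using b e1 lampos by (simp add: \<kappa>_def)
  define C where "C = e1/b + 1 + eps + lam"
  have Cpos: "C > 0" using b e1 epspos lampos by (simp add: C_def add_pos_pos)
  define c0 where "c0 = min (min (eps * e1) (k/2)) (lam * s/2)"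
  have c0pos: "c0 > 0" using epspos e1 k lampos s by (simp add: c0_def)
  define K where "K = e1/b + lam + 2 * eps"
  have Kpos: "K > 0" using b e1 epspos lampos by (simp add: K_def add_pos_pos)
  define \<theta>0 where "\<theta>0 = c0 / (2 * K)"
  have \<theta>0pos: "\<theta>0 > 0" using c0pos Kpos by (simp add: \<theta>0_def)
  define c where "c = c0 / (2 * C)"
  have cpos: "c > 0" using c0pos Cpos by (simp add: c_def)
  have lower: "\<kappa> * (sg^2 + D^2 + j^2) \<le> (e1/b) * sg^2 + j^2 + lam * D^2 - 2 * eps * sg * j" for sg D j
  proof -
    define X where "X = (e1/(2 * b)) * sg^2"
    define Y where "Y = (e1/b) * sg^2"
    have f1: "2 * eps * sg * j \<le> eps * sg^2 + eps * j^2"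
      using mult_left_mono[OF sq_ineq[of sg j], of eps] epspos by (simp add: algebra_simps)
    have f2: "eps * sg^2 \<le> X" unfolding X_def by (rule mult_right_mono[OF eps3]) simp
    have f3: "eps * j^2 \<le> (1/2) * j^2" by (rule mult_right_mono[OF eps4]) simp
    have f4: "\<kappa> * sg^2 \<le> X" unfolding X_def by (rule mult_right_mono) (auto simp: \<kappa>_def)
    have f5: "\<kappa> * j^2 \<le> (1/2) * j^2" by (rule mult_right_mono) (auto simp: \<kappa>_def)
    have f6: "\<kappa> * D^2 \<le> lam * D^2" by (rule mult_right_mono) (auto simp: \<kappa>_def)
    have f7: "Y = 2 * X" unfolding X_def Y_def by simp
    have f8: "\<kappa> * (sg^2+D^2+j^2) = \<kappa> * sg^2 + \<kappa> * D^2 + \<kappa> * j^2" by (simp add: algebra_simps)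
    have "\<kappa> * (sg^2 + D^2 + j^2) \<le> Y + j^2 + lam * D^2 - 2 * eps * sg * j"
      using f1 f2 f3 f4 f5 f6 f7 f8 by linarith
    then show ?thesis unfolding Y_def .
  qed
  have upper: "(e1/b) * sg^2 + j^2 + lam * D^2 - 2 * eps * sg * j \<le> C * (sg^2 + D^2 + j^2)" for sg D j
  proof -
    define Y where "Y = e1/b"
    have Y: "Y > 0" using b e1 by (simp add: Y_def)
    have "- 2 * eps * sg * j \<le> eps * (sg^2 + j^2)"
      using mult_left_mono[OF sq_ineq[of "-sg" j], of eps] epspos by (simp add: algebra_simps)
    moreover have "0 \<le> (1 + lam) * sg^2" using lampos by simp
    moreover have "0 \<le> (Y + lam) * j^2" using lampos Y by simp
    moreover have "0 \<le> (Y + 1 + eps) * D^2" using epspos Y by simp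
    ultimately have "Y * sg^2 + j^2 + lam * D^2 - 2 * eps * sg * j \<le> (Y + 1 + eps + lam) * (sg^2 + D^2 + j^2)"
      by (simp add: algebra_simps; linarith)
    then show ?thesis unfolding Y_def C_def .
  qed
  have deriv: "2 * (e1/b) * sg * sg' + 2 * j * j' + 2 * lam * D * D' - 2 * eps * (sg' * j + sg * j')
          \<le> - c * ((e1/b) * sg^2 + j^2 + lam * D^2 - 2 * eps * sg * j)"
    if H: "sg' = -b * j + r1" "D' = -s * D - d * j + r2" "j' = e1 * sg + e2 * D - k * j"
      "\<bar>r1\<bar> \<le> \<theta> * \<bar>j\<bar>" "\<bar>r2\<bar> \<le> \<theta> * \<bar>j\<bar>" "0 \<le> \<theta>" "\<theta> \<le> \<theta>0"
    for sg D j sg' D' j' r1 r2 \<theta>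
  proof -
    define S where "S = sg^2 + D^2 + j^2"
    define L where "L = 2 * (e1/b) * sg * (-b * j) + 2 * j * (e1 * sg + e2 * D - k * j) + 2 * lam * D * (-s * D - d * j)
        - 2 * eps * ((-b * j) * j + sg * (e1 * sg + e2 * D - k * j))"
    have id: "2 * (e1/b) * sg * sg' + 2 * j * j' + 2 * lam * D * D' - 2 * eps * (sg' * j + sg * j')
       = L + ((e1/b) * (2 * sg * r1) + lam * (2 * D * r2) + eps * (2 * (-j) * r1))"
      using b unfolding L_def H(1-3) by (simp add: field_simps)
    have Lb: "L \<le> - (eps * e1) * sg^2 - (k/2) * j^2 - (lam * s/2) * D^2"
      unfolding L_def by (rule lyap_lin[OF b d s k e1 e2 e2k lam_def epspos eps1 eps2])
    have R1: "(e1/b) * (2 * sg * r1) \<le> (e1/b) * (\<theta> * (sg^2+j^2))"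
      by (rule mult_left_mono[OF rem_bound[OF H(4,6), of sg]]) (use b e1 in simp)
    have R2: "lam * (2 * D * r2) \<le> lam * (\<theta> * (D^2+j^2))"
      by (rule mult_left_mono[OF rem_bound[OF H(5,6), of D]]) (use lampos in simp)
    have R3: "eps * (2 * (-j) * r1) \<le> eps * (\<theta> * ((-j)^2+j^2))"
      by (rule mult_left_mono[OF rem_bound[OF H(4,6), of "-j"]]) (use epspos in simp)
    have inner: "(e1/b) * (sg^2+j^2) + lam * (D^2+j^2) + eps * ((-j)^2+j^2) \<le> K * S"
    proof -
      have "0 \<le> (lam + 2 * eps) * sg^2" using epspos lampos by simp
      moreover have "0 \<le> (e1/b + 2 * eps) * D^2" using epspos b e1 by simp
      ultimately show ?thesis by (simp add: K_def S_def algebra_simps)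
    qed
    have "(e1/b) * (\<theta> * (sg^2+j^2)) + lam * (\<theta> * (D^2+j^2)) + eps * (\<theta> * ((-j)^2+j^2))
        = \<theta> * ((e1/b) * (sg^2+j^2) + lam * (D^2+j^2) + eps * ((-j)^2+j^2))" by (simp add: algebra_simps)
    also have "\<dots> \<le> \<theta> * (K * S)" using inner H(6) by (simp add: mult_left_mono)
    also have "\<dots> \<le> \<theta>0 * (K * S)" using H(7) Kpos by (simp add: mult_right_mono S_def)
    also have "\<dots> = (c0/2) * S" using Kpos by (simp add: \<theta>0_def)
    finally have Rb: "(e1/b) * (\<theta> * (sg^2+j^2)) + lam * (\<theta> * (D^2+j^2)) + eps * (\<theta> * ((-j)^2+j^2)) \<le> (c0/2) * S" .
    have c0b: "c0 * S \<le> (eps * e1) * sg^2 + (k/2) * j^2 + (lam * s/2) * D^2"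
    proof -
      have "c0 * sg^2 \<le> (eps * e1) * sg^2" by (rule mult_right_mono) (auto simp: c0_def)
      moreover have "c0 * j^2 \<le> (k/2) * j^2" by (rule mult_right_mono) (auto simp: c0_def)
      moreover have "c0 * D^2 \<le> (lam * s/2) * D^2" by (rule mult_right_mono) (auto simp: c0_def)
      ultimately show ?thesis by (simp add: S_def algebra_simps)
    qed
    have Wb: "c * ((e1/b) * sg^2 + j^2 + lam * D^2 - 2 * eps * sg * j) \<le> c * (C * S)"
      using upper[of sg j D] cpos by (simp add: mult_left_mono S_def)
    have "c * (C * S) = (c0/2) * S" using Cpos by (simp add: c_def)
    define T1 where "T1 = (eps * e1) * sg^2"
    define T2 where "T2 = (k/2) * j^2"
    define T3 where "T3 = (lam * s/2) * D^2"
    define Z where "Z = c0 * S"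
    define Wv where "Wv = (e1/b) * sg^2 + j^2 + lam * D^2 - 2 * eps * sg * j"
    have Lb': "L \<le> - T1 - T2 - T3" using Lb by (simp add: T1_def T2_def T3_def)
    have c0b': "Z \<le> T1 + T2 + T3" using c0b by (simp add: T1_def T2_def T3_def Z_def)
    have Z2: "(c0/2) * S = Z/2" by (simp add: Z_def)
    have Wb': "c * Wv \<le> Z/2" using Wb \<open>c * (C * S) = (c0/2) * S\<close> Z2 by (simp add: Wv_def)
    have negc: "- c * Wv = - (c * Wv)" by simp
    have "2 * (e1/b) * sg * sg' + 2 * j * j' + 2 * lam * D * D' - 2 * eps * (sg' * j + sg * j') \<le> - c * Wv"
      using id Lb' R1 R2 R3 Rb c0b' Wb' negc Z2 by linarith
    then show ?thesis by (simp add: Wv_def)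
  qed
  show ?thesis
    apply (rule exI[of _ lam], rule exI[of _ eps], rule exI[of _ \<kappa>], rule exI[of _ c], rule exI[of _ \<theta>0])
    using lampos epspos \<kappa>pos cpos \<theta>0pos lower deriv by blast
qed



lemma deriv_approx:
  fixes f :: "real \<Rightarrow> real"
  assumes "(f has_real_derivative D) (at x)" "\<epsilon> > 0"
  shows "\<exists>\<delta>>0. \<forall>h. \<bar>h\<bar> < \<delta> \<longrightarrow> \<bar>f (x + h) - f x - D * h\<bar> \<le> \<epsilon> * \<bar>h\<bar>"
proof -
  have "(\<lambda>h. (f (x + h) - f x) / h) \<midarrow>0\<rightarrow> D" using assms(1) by (simp add: DERIV_def)
  from LIM_D[OF this assms(2)] obtain \<delta> where \<delta>: "\<delta> > 0"
    "\<And>h. h \<noteq> 0 \<and> norm (h - 0) < \<delta> \<Longrightarrow> norm ((f (x + h) - f x) / h - D) < \<epsilon>" by blast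
  show ?thesis
  proof (intro exI[of _ \<delta>] conjI allI impI \<delta>(1))
    fix h :: real assume h: "\<bar>h\<bar> < \<delta>"
    show "\<bar>f (x + h) - f x - D * h\<bar> \<le> \<epsilon> * \<bar>h\<bar>"
    proof (cases "h = 0")
      case True then show ?thesis by simp
    next
      case False
      have "\<bar>(f (x + h) - f x) / h - D\<bar> < \<epsilon>" using \<delta>(2)[of h] h False by simp
      moreover have "f (x + h) - f x - D * h = ((f (x + h) - f x) / h - D) * h"
        using False by (simp add: field_simps)
      ultimately show ?thesis using False
        by (simp add: abs_mult mult_right_mono)
    qed
  qed
qed

lemma dist3s: "dist (x1::real, x2::real, x3::real) (y1, y2, y3) = sqrt ((x1-y1)^2 + (x2-y2)^2 + (x3-y3)^2)"
  by (simp add: dist_Pair_Pair dist_real_def add.assoc)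

lemma dist3: "(dist (x1::real, x2::real, x3::real) (y1, y2, y3))^2 = (x1-y1)^2 + (x2-y2)^2 + (x3-y3)^2"
  unfolding dist3s by simp

lemma dist3_comp:
  "\<bar>x1 - y1\<bar> \<le> dist (x1::real, x2::real, x3::real) (y1, y2, y3)"
  "\<bar>x2 - y2\<bar> \<le> dist (x1::real, x2::real, x3::real) (y1, y2, y3)"
  "\<bar>x3 - y3\<bar> \<le> dist (x1::real, x2::real, x3::real) (y1, y2, y3)"
  unfolding dist3s by (auto intro!: real_le_rsqrt)

lemma cs_ineq: "((a::real) * x + b * y)^2 \<le> (a^2 + b^2) * (x^2 + y^2)"
proof -
  have "0 \<le> (a * y - b * x)^2" by simp
  then show ?thesis by (simp add: power2_eq_square algebra_simps)
qed


lemma rbound: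
  fixes E G P N T \<epsilon>0 fd j :: real
  assumes "\<bar>E\<bar> \<le> \<epsilon>0 * \<bar>j\<bar>" "\<bar>G\<bar> \<le> N" "\<bar>G - P\<bar> \<le> T" "\<epsilon>0 \<ge> 0"
  shows "\<bar>E * G + fd * j * (G - P)\<bar> \<le> (\<epsilon>0 * N + \<bar>fd\<bar> * T) * \<bar>j\<bar>"
proof -
  have "\<bar>E * G + fd * j * (G - P)\<bar> \<le> \<bar>E\<bar> * \<bar>G\<bar> + \<bar>fd\<bar> * \<bar>j\<bar> * \<bar>G - P\<bar>"
    by (metis abs_mult abs_triangle_ineq)
  moreover have "\<bar>E\<bar> * \<bar>G\<bar> \<le> (\<epsilon>0 * \<bar>j\<bar>) * N"
    using assms by (intro mult_mono) auto
  moreover have "\<bar>fd\<bar> * \<bar>j\<bar> * \<bar>G - P\<bar> \<le> \<bar>fd\<bar> * \<bar>j\<bar> * T"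
    using assms by (intro mult_left_mono) auto
  moreover have "(\<epsilon>0 * \<bar>j\<bar>) * N + \<bar>fd\<bar> * \<bar>j\<bar> * T = (\<epsilon>0 * N + \<bar>fd\<bar> * T) * \<bar>j\<bar>"
    by (simp add: algebra_simps)
  ultimately show ?thesis by linarith
qed

lemma lin2:
  fixes \<alpha> \<beta> y z r :: real
  assumes "\<alpha> \<ge> 0" "\<beta> \<ge> 0" "\<bar>z\<bar> \<le> r" "\<bar>y\<bar> \<le> r"
  shows "\<bar>\<alpha> * z + \<beta> * y\<bar> \<le> (\<alpha> + \<beta>) * r" "\<bar>\<alpha> * z - \<beta> * y\<bar> \<le> (\<alpha> + \<beta>) * r"
proof -
  have a: "\<bar>\<alpha> * z\<bar> \<le> \<alpha> * r" using assms by (simp add: abs_mult mult_left_mono)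
  have b: "\<bar>\<beta> * y\<bar> \<le> \<beta> * r" using assms by (simp add: abs_mult mult_left_mono)
  have e: "(\<alpha> + \<beta>) * r = \<alpha> * r + \<beta> * r" by (simp add: algebra_simps)
  show "\<bar>\<alpha> * z + \<beta> * y\<bar> \<le> (\<alpha> + \<beta>) * r" using a b e abs_triangle_ineq[of "\<alpha> * z" "\<beta> * y"] by linarith
  show "\<bar>\<alpha> * z - \<beta> * y\<bar> \<le> (\<alpha> + \<beta>) * r" using a b e abs_triangle_ineq4[of "\<alpha> * z" "\<beta> * y"] by linarith
qed

theorem mainTheorem15:
  fixes a a' w w' :: "real \<Rightarrow> real"
    and q l bHM bMH gam mu rho SH k IHs IMs Js :: real
  assumes a_deriv: "\<And>x. x \<ge> 0 \<Longrightarrow> (a has_real_derivative a' x) (at x within {0..})"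
    and w_deriv: "\<And>x. x \<ge> 0 \<Longrightarrow> (w has_real_derivative w' x) (at x within {0..})"
    and a'_cont: "continuous_on {0..} a'"
    and w'_cont: "continuous_on {0..} w'"
    and a_pos: "\<And>x. x \<ge> 0 \<Longrightarrow> a x > 0"
    and w_pos: "\<And>x. x \<ge> 0 \<Longrightarrow> w x > 0"
    and a'_pos: "\<And>x. x \<ge> 0 \<Longrightarrow> a' x > 0"
    and w'_nonpos: "\<And>x. x \<ge> 0 \<Longrightarrow> w' x \<le> 0"
    and q: "0 \<le> q" "q < 1"
    and l: "l \<ge> 0"
    and SH: "SH > 0"
    and params: "bHM > 0" "bMH > 0" "gam > 0" "mu > 0" "rho > 0"
    and k: "k > 0"
    and R: "Re_hat bHM bMH gam mu rho SH * h_fun l (p_fun a w 0) q > 1"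
    and equil: "rhsO a w q l bHM bMH gam mu rho SH k (IHs, IMs, Js) = (0, 0, 0)"
    and IHs_pos: "IHs > 0"
    and gam_ge_mu: "gam \<ge> mu"
  shows "loc_asym_stable (rhsO a w q l bHM bMH gam mu rho SH k) (IHs, IMs, Js)"
proof -
  define A where "A = bHM * rho * SH"
  define ff where "ff = f_fun a w q l"
  define Fs where "Fs = ff Js"
  have eq1: "A * Fs * IMs - gam * IHs = 0" and eq2: "bMH * Fs * IHs - mu * IMs = 0"
    and eq3: "k * IHs - k * Js = 0"
    using equil by (simp_all add: rhsO_def A_def ff_def Fs_def)
  have JsIHs: "Js = IHs" using eq3 k by simp
  have Js_pos: "Js > 0" using JsIHs IHs_pos by simp
  have A_pos: "A > 0" using params SH by (simp add: A_def)
  have p_bounds: "0 < p_fun a w x \<and> p_fun a w x < 1" if "x \<ge> 0" for x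
    using a_pos[OF that] w_pos[OF that] by (simp add: p_fun_def field_simps)
  have c_pos: "c_fun (p_fun a w x) q > 0" if "x \<ge> 0" for x
  proof -
    have "p_fun a w x * (1 - q) \<le> p_fun a w x" using p_bounds[OF that] q by (intro mult_left_le) auto
    then show ?thesis using p_bounds[OF that] unfolding c_fun_def by linarith
  qed
  have prod: "A * bMH * Fs^2 = gam * mu"
  proof -
    have "A * Fs * (bMH * Fs * IHs) = A * Fs * (mu * IMs)" using eq2 by simp
    also have "\<dots> = mu * (A * Fs * IMs)" by simp
    also have "\<dots> = mu * (gam * IHs)" using eq1 by simp
    finally have "(A * bMH * Fs^2) * IHs = (gam * mu) * IHs" by (simp add: algebra_simps power2_eq_square)
    then show ?thesis using IHs_pos by simp
  qed
  have l_pos: "l > 0"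
  proof (rule ccontr)
    assume "\<not> l > 0"
    then have l0: "l = 0" using l by simp
    have h1: "h_fun l (p_fun a w x) q = 1" if "x \<ge> 0" for x
      using c_pos[OF that] l0 by (simp add: h_fun_def)
    have "Fs = 1" using h1[of Js] Js_pos by (simp add: Fs_def ff_def f_fun_def)
    then have "A * bMH = gam * mu" using prod by simp
    then have e: "bHM * bMH * rho * SH = gam * mu" by (simp add: A_def algebra_simps)
    have nz: "gam * mu \<noteq> 0" using params by simp
    have "bHM * bMH / (gam * mu) * rho * SH = (bHM * bMH * rho * SH) / (gam * mu)" by simp
    then have "bHM * bMH / (gam * mu) * rho * SH = 1" using e nz by simp
    then have "Re_hat bHM bMH gam mu rho SH = 1" unfolding Re_hat_def by (simp only:) simp
    then show False using R h1[of 0] by simp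
  qed
  have Fs_pos: "Fs > 0" using c_pos[of Js] Js_pos l_pos by (simp add: Fs_def ff_def f_fun_def h_fun_def)
  have IMs_eq: "IMs = bMH * Fs * IHs / mu" using eq2 params by (simp add: field_simps)
  have IMs_pos: "IMs > 0" unfolding IMs_eq using params Fs_pos IHs_pos by simp
  have int: "at Js within {0..} = at Js" by (rule at_within_interior) (use Js_pos in simp)
  have aD: "(a has_real_derivative a' Js) (at Js)" using a_deriv[of Js] Js_pos int by simp
  have wD: "(w has_real_derivative w' Js) (at Js)" using w_deriv[of Js] Js_pos int by simp
  define pd where "pd = (a' Js * (a Js + w Js) - a Js * (a' Js + w' Js)) / ((a Js + w Js) * (a Js + w Js))"
  have pD: "((\<lambda>x. a x / (a x + w x)) has_real_derivative pd) (at Js)"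
    unfolding pd_def
    by (rule DERIV_divide[OF aD DERIV_add[OF aD wD]]) (use a_pos[of Js] w_pos[of Js] Js_pos in simp)
  have pd_pos: "pd > 0"
  proof -
    have "a' Js * (a Js + w Js) - a Js * (a' Js + w' Js) = a' Js * w Js - a Js * w' Js"
      by (simp add: algebra_simps)
    moreover have "a' Js * w Js > 0" using a'_pos[of Js] w_pos[of Js] Js_pos by simp
    moreover have "a Js * w' Js \<le> 0" using a_pos[of Js] w'_nonpos[of Js] Js_pos
      by (simp add: mult_nonneg_nonpos)
    ultimately show ?thesis unfolding pd_def using a_pos[of Js] w_pos[of Js] Js_pos by simp
  qed
  define cd where "cd = 0 - pd * (1 - q)"
  have cD: "((\<lambda>x. 1 - a x / (a x + w x) * (1 - q)) has_real_derivative cd) (at Js)"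
    unfolding cd_def by (rule DERIV_diff[OF DERIV_const DERIV_cmult_right[OF pD]])
  define cs where "cs = 1 - a Js / (a Js + w Js) * (1 - q)"
  have cs_pos: "cs > 0" using c_pos[of Js] Js_pos by (simp add: cs_def c_fun_def p_fun_def)
  define fd where "fd = (cd * (cs + l) - cs * (cd + 0)) / ((cs + l) * (cs + l))"
  have fD0: "((\<lambda>x. (1 - a x / (a x + w x) * (1 - q)) / ((1 - a x / (a x + w x) * (1 - q)) + l))
      has_real_derivative fd) (at Js)"
    unfolding fd_def cs_def
    by (rule DERIV_divide[OF cD DERIV_add[OF cD DERIV_const]]) (use cs_pos l_pos in \<open>simp add: cs_def\<close>)
  have ff_eq: "ff = (\<lambda>x. (1 - a x / (a x + w x) * (1 - q)) / ((1 - a x / (a x + w x) * (1 - q)) + l))"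
    by (simp add: ff_def fun_eq_iff f_fun_def h_fun_def c_fun_def p_fun_def)
  have fD: "(ff has_real_derivative fd) (at Js)" using fD0 ff_eq by simp
  have fd_neg: "fd < 0"
  proof -
    have "cd < 0" using pd_pos q by (simp add: cd_def)
    moreover have "cd * (cs + l) - cs * (cd + 0) = cd * l" by (simp add: algebra_simps)
    moreover have "cd * l < 0" using \<open>cd < 0\<close> l_pos by (rule mult_neg_pos)
    moreover have "(cs + l) * (cs + l) > 0" using cs_pos l_pos by simp
    ultimately show ?thesis unfolding fd_def by (simp add: divide_neg_pos)
  qed
  define u where "u = A * Fs"
  have u_pos: "u > 0" using A_pos Fs_pos by (simp add: u_def)
  have uv: "u * bMH * Fs = gam * mu" using prod by (simp add: u_def power2_eq_square algebra_simps)
  have uIMs: "u * IMs = gam * IHs" using eq1 by (simp add: u_def)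
  have uIHs: "u * bMH * IHs = mu * A * IMs" using eq2 by (simp add: u_def algebra_simps)
  define s where "s = gam + mu"
  have s_pos: "s > 0" using params by (simp add: s_def)
  define P where "P = 2 * mu * A * IMs"
  define Qc where "Qc = A * IMs * (gam - mu) / gam"
  have P_pos: "P > 0" using params A_pos IMs_pos by (simp add: P_def)
  have Qc_nn: "Qc \<ge> 0" using params A_pos IMs_pos gam_ge_mu by (simp add: Qc_def)
  define b where "b = - P * fd"
  define d where "d = - Qc * fd"
  define e1 where "e1 = k / s"
  define e2 where "e2 = k * gam / s"
  have b_pos: "b > 0" using P_pos fd_neg by (simp add: b_def mult_pos_neg)
  have d_nn: "d \<ge> 0" using Qc_nn fd_neg by (simp add: d_def mult_nonneg_nonpos)
  have e1_pos: "e1 > 0" using k s_pos by (simp add: e1_def)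
  have e2_pos: "e2 > 0" using k s_pos params by (simp add: e2_def)
  have e2k: "e2 < k"
  proof -
    have "k * gam < k * s" using k params by (simp add: s_def)
    then show ?thesis using s_pos by (simp add: e2_def divide_less_eq)
  qed
  obtain lam eps \<kappa> c \<theta>0 where lam: "lam > 0" and epsp: "eps > 0" and \<kappa>: "\<kappa> > 0" and c: "c > 0"
    and \<theta>0: "\<theta>0 > 0"
    and low: "\<forall>sg D j. \<kappa> * (sg^2 + D^2 + j^2) \<le> (e1/b) * sg^2 + j^2 + lam * D^2 - 2 * eps * sg * j"
    and der: "\<forall>sg D j sg' D' j' r1 r2 \<theta>. sg' = -b * j + r1 \<longrightarrow> D' = -s * D - d * j + r2 \<longrightarrow>
        j' = e1 * sg + e2 * D - k * j \<longrightarrow> \<bar>r1\<bar> \<le> \<theta> * \<bar>j\<bar> \<longrightarrow> \<bar>r2\<bar> \<le> \<theta> * \<bar>j\<bar> \<longrightarrow>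
        0 \<le> \<theta> \<longrightarrow> \<theta> \<le> \<theta>0 \<longrightarrow>
        2 * (e1/b) * sg * sg' + 2 * j * j' + 2 * lam * D * D' - 2 * eps * (sg' * j + sg * j')
          \<le> - c * ((e1/b) * sg^2 + j^2 + lam * D^2 - 2 * eps * sg * j)"
    using lyap_exists[OF b_pos d_nn s_pos k e1_pos e2_pos e2k] by blast
  define sgf where "sgf p = mu * (fst p - IHs) + u * (fst (snd p) - IMs)" for p :: "real \<times> real \<times> real"
  define Df where "Df p = (fst p - IHs) - (u / gam) * (fst (snd p) - IMs)" for p :: "real \<times> real \<times> real"
  define jf where "jf p = snd (snd p) - Js" for p :: "real \<times> real \<times> real"
  define sgl where "sgl h = mu * fst h + u * fst (snd h)" for h :: "real \<times> real \<times> real"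
  define Dl where "Dl h = fst h - (u / gam) * fst (snd h)" for h :: "real \<times> real \<times> real"
  define jl where "jl h = snd (snd h)" for h :: "real \<times> real \<times> real"
  define V where "V p = (e1/b) * (sgf p)^2 + (jf p)^2 + lam * (Df p)^2 - 2 * eps * sgf p * jf p"
    for p :: "real \<times> real \<times> real"
  define DV where "DV p h = 2 * (e1/b) * sgf p * sgl h + 2 * jf p * jl h + 2 * lam * Df p * Dl h
      - 2 * eps * (sgl h * jf p + sgf p * jl h)" for p h :: "real \<times> real \<times> real"
  have Vd: "(V has_derivative DV p) (at p)" for p
    unfolding V_def[abs_def] DV_def[abs_def] sgf_def sgl_def Df_def Dl_def jf_def jl_def
    using b_pos params by (auto intro!: derivative_eq_intros ext simp: field_simps power2_eq_square)
  define e where "e = (IHs, IMs, Js)"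
  have Ve: "V e = 0" by (simp add: V_def e_def sgf_def Df_def jf_def)
  define \<alpha>1 where "\<alpha>1 = 1 / s"
  define \<beta>1 where "\<beta>1 = gam / s"
  define \<alpha>2 where "\<alpha>2 = gam / (u * s)"
  define \<beta>2 where "\<beta>2 = - (mu * gam / (u * s))"
  define a1 where "a1 = \<alpha>1^2 + \<beta>1^2"
  define a2 where "a2 = \<alpha>2^2 + \<beta>2^2"
  define M where "M = 1 + a1 + a2"
  have a1nn: "a1 \<ge> 0" and a2nn: "a2 \<ge> 0" by (simp_all add: a1_def a2_def)
  have M_pos: "M > 0" using a1nn a2nn by (simp add: M_def)
  have Vlow: "(\<kappa> / M) * (dist p e)^2 \<le> V p" for p
  proof -
    obtain X1 X2 X3 where p: "p = (X1, X2, X3)" by (cases p) auto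
    define y where "y = X1 - IHs"
    define z where "z = X2 - IMs"
    define j where "j = X3 - Js"
    define sg where "sg = mu * y + u * z"
    define Dv where "Dv = y - (u / gam) * z"
    have h1: "s * y = sg + gam * Dv" using params by (simp add: sg_def Dv_def s_def field_simps)
    have yid: "y = \<alpha>1 * sg + \<beta>1 * Dv"
      using h1 s_pos by (simp add: \<alpha>1_def \<beta>1_def field_simps)
    have h2: "u * z = sg - mu * y" by (simp add: sg_def)
    have "u * s * z = s * (u * z)" by simp
    also have "\<dots> = s * sg - mu * (s * y)" unfolding h2 by (simp add: algebra_simps)
    also have "\<dots> = gam * sg - mu * gam * Dv" unfolding h1 by (simp add: s_def algebra_simps)
    finally have h3: "u * s * z = gam * sg - mu * gam * Dv" .
    have zid: "z = \<alpha>2 * sg + \<beta>2 * Dv"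
      using h3 s_pos u_pos by (simp add: \<alpha>2_def \<beta>2_def field_simps)
    have y2: "y^2 \<le> a1 * (sg^2 + Dv^2)" unfolding a1_def yid by (rule cs_ineq)
    have z2: "z^2 \<le> a2 * (sg^2 + Dv^2)" unfolding a2_def zid by (rule cs_ineq)
    have d2: "(dist p e)^2 = y^2 + z^2 + j^2" by (simp add: p e_def y_def z_def j_def dist3)
    define S where "S = sg^2 + Dv^2 + j^2"
    have "(dist p e)^2 \<le> M * S"
    proof -
      have "a1 * (sg^2 + Dv^2) \<le> a1 * S" by (rule mult_left_mono) (auto simp: S_def a1nn)
      moreover have "a2 * (sg^2 + Dv^2) \<le> a2 * S" by (rule mult_left_mono) (auto simp: S_def a2nn)
      moreover have "M * S = S + a1 * S + a2 * S" by (simp add: M_def algebra_simps)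
      moreover have "j^2 \<le> S" by (simp add: S_def)
      ultimately show ?thesis using d2 y2 z2 by linarith
    qed
    then have "(\<kappa> / M) * (dist p e)^2 \<le> (\<kappa> / M) * (M * S)"
      using \<kappa> M_pos by (intro mult_left_mono) auto
    also have "\<dots> = \<kappa> * S" using M_pos by simp
    also have "\<dots> \<le> V p"
      using low unfolding S_def V_def p sgf_def Df_def jf_def sg_def Dv_def y_def z_def j_def by simp
    finally show ?thesis .
  qed
  define N where "N = P + Qc + 1"
  have N_pos: "N > 0" using P_pos Qc_nn by (simp add: N_def)
  define M1 where "M1 = mu * A + u * bMH + A + (u / gam) * bMH"
  have M1_nn: "M1 \<ge> 0" using params A_pos u_pos by (simp add: M1_def)
  define \<epsilon>0 where "\<epsilon>0 = \<theta>0 / (2 * N)"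
  have \<epsilon>0_pos: "\<epsilon>0 > 0" using \<theta>0 N_pos by (simp add: \<epsilon>0_def)
  obtain \<delta>0 where \<delta>0: "\<delta>0 > 0" "\<And>h. \<bar>h\<bar> < \<delta>0 \<Longrightarrow> \<bar>ff (Js + h) - ff Js - fd * h\<bar> \<le> \<epsilon>0 * \<bar>h\<bar>"
    using deriv_approx[OF fD \<epsilon>0_pos] by blast
  define Rr where "Rr = min \<delta>0 (min (1 / (M1 + 1)) (\<theta>0 / (2 * (\<bar>fd\<bar> + 1) * (M1 + 1))))"
  have Rr_pos: "Rr > 0" using \<delta>0 M1_nn \<theta>0 by (simp add: Rr_def)
  have Rr1: "M1 * Rr \<le> 1"
  proof -
    have "Rr \<le> 1 / (M1 + 1)" by (simp add: Rr_def)
    then have "(M1 + 1) * Rr \<le> 1" using M1_nn by (simp add: field_simps)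
    then show ?thesis using Rr_pos by (simp add: algebra_simps)
  qed
  have Rr2: "\<bar>fd\<bar> * (M1 * Rr) \<le> \<theta>0 / 2"
  proof -
    have "Rr \<le> \<theta>0 / (2 * (\<bar>fd\<bar> + 1) * (M1 + 1))" by (simp add: Rr_def)
    then have "(2 * (\<bar>fd\<bar> + 1) * (M1 + 1)) * Rr \<le> \<theta>0" using M1_nn
      by (simp add: field_simps add_pos_nonneg)
    moreover have "\<bar>fd\<bar> * (M1 * Rr) \<le> (\<bar>fd\<bar> + 1) * (M1 + 1) * Rr"
    proof -
      have "\<bar>fd\<bar> * M1 \<le> (\<bar>fd\<bar> + 1) * (M1 + 1)" by (intro mult_mono) (use M1_nn in auto)
      then have "(\<bar>fd\<bar> * M1) * Rr \<le> ((\<bar>fd\<bar> + 1) * (M1 + 1)) * Rr" using Rr_pos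
        by (intro mult_right_mono) auto
      then show ?thesis by (simp add: mult.assoc)
    qed
    ultimately show ?thesis by (simp add: algebra_simps)
  qed
  define F where "F = rhsO a w q l bHM bMH gam mu rho SH k"
  have dec: "DV p (F p) \<le> - c * V p" if dp: "dist p e < Rr" for p
  proof -
    obtain X1 X2 X3 where p: "p = (X1, X2, X3)" by (cases p) auto
    define y where "y = X1 - IHs"
    define z where "z = X2 - IMs"
    define j where "j = X3 - Js"
    define sg where "sg = mu * y + u * z"
    define Dv where "Dv = y - (u / gam) * z"
    have dd: "\<bar>y\<bar> \<le> dist p e" "\<bar>z\<bar> \<le> dist p e" "\<bar>j\<bar> \<le> dist p e"
      unfolding p e_def dist3s y_def z_def j_def by (auto intro!: real_le_rsqrt)
    have "Rr \<le> \<delta>0" by (simp add: Rr_def)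
    then have ay: "\<bar>y\<bar> \<le> Rr" and az: "\<bar>z\<bar> \<le> Rr" and aj: "\<bar>j\<bar> < \<delta>0"
      using dd dp by linarith+
    define \<phi> where "\<phi> = ff X3 - Fs"
    have X3j: "X3 = Js + j" by (simp add: j_def)
    have E1: "\<bar>\<phi> - fd * j\<bar> \<le> \<epsilon>0 * \<bar>j\<bar>" using \<delta>0(2)[OF aj] by (simp add: \<phi>_def Fs_def X3j)
    have Fp: "F p = (A * ff X3 * X2 - gam * X1, bMH * ff X3 * X1 - mu * X2, k * X1 - k * X3)"
      by (simp add: F_def p rhsO_def A_def ff_def)
    define G where "G = mu * A * X2 + u * bMH * X1"
    define H where "H = A * X2 - (u / gam) * bMH * X1"
    have ffX3: "ff X3 = Fs + \<phi>" by (simp add: \<phi>_def)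
    have sg': "sgl (F p) = \<phi> * G"
    proof -
      have "sgl (F p) - \<phi> * G = mu * X2 * (A * Fs - u) + X1 * (u * bMH * Fs - gam * mu)"
        unfolding Fp sgl_def ffX3 G_def by (simp add: algebra_simps)
      then show ?thesis using uv by (simp add: u_def)
    qed
    have D': "Dl (F p) = - s * Dv + \<phi> * H"
    proof -
      have "Dl (F p) - (- s * Dv + \<phi> * H) = X2 * (A * Fs - u) + X1 * (mu - u * bMH * Fs / gam)
          + (s / gam) * (u * IMs - gam * IHs)"
        unfolding Fp Dl_def ffX3 H_def Dv_def y_def z_def s_def using params
        by (simp add: field_simps)
      moreover have "mu - u * bMH * Fs / gam = 0" using uv params by simp
      ultimately show ?thesis using uIMs by (simp add: u_def)
    qed
    have j': "jl (F p) = e1 * sg + e2 * Dv - k * j"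
    proof -
      have "e1 * sg + e2 * Dv = (k / s) * (sg + gam * Dv)" by (simp add: e1_def e2_def algebra_simps)
      also have "sg + gam * Dv = s * y" using params by (simp add: sg_def Dv_def s_def field_simps)
      finally have "e1 * sg + e2 * Dv = k * y" using s_pos by simp
      then show ?thesis unfolding Fp jl_def y_def j_def using JsIHs by (simp add: algebra_simps)
    qed
    define r1 where "r1 = sgl (F p) + b * j"
    define r2 where "r2 = Dl (F p) + s * Dv + d * j"
    have r1_eq: "r1 = (\<phi> - fd * j) * G + fd * j * (G - P)"
      unfolding r1_def sg' b_def by (simp add: algebra_simps)
    have r2_eq: "r2 = (\<phi> - fd * j) * H + fd * j * (H - Qc)"
      unfolding r2_def D' d_def by (simp add: algebra_simps)
    have GP: "G - P = mu * A * z + u * bMH * y"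
      unfolding G_def P_def y_def z_def using uIHs by (simp add: algebra_simps)
    have HQ: "H - Qc = A * z - (u / gam * bMH) * y"
    proof -
      have "H - Qc = A * z - (u / gam * bMH) * y + (mu * A * IMs - u * bMH * IHs) / gam"
        unfolding H_def Qc_def y_def z_def using params by (simp add: field_simps)
      then show ?thesis using uIHs by simp
    qed
    have GPb: "\<bar>G - P\<bar> \<le> M1 * Rr"
    proof -
      have "\<bar>G - P\<bar> \<le> (mu * A + u * bMH) * Rr"
        unfolding GP using lin2(1)[OF _ _ az ay, of "mu * A" "u * bMH"] params A_pos u_pos by simp
      also have "\<dots> \<le> M1 * Rr" using Rr_pos params A_pos u_pos
        by (intro mult_right_mono) (auto simp: M1_def)
      finally show ?thesis .
    qed
    have HQb: "\<bar>H - Qc\<bar> \<le> M1 * Rr"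
    proof -
      have "\<bar>H - Qc\<bar> \<le> (A + u / gam * bMH) * Rr"
        unfolding HQ using lin2(2)[OF _ _ az ay, of "A" "u / gam * bMH"] params A_pos u_pos by simp
      also have "\<dots> \<le> M1 * Rr" using Rr_pos params A_pos u_pos
        by (intro mult_right_mono) (auto simp: M1_def)
      finally show ?thesis .
    qed
    have Gb: "\<bar>G\<bar> \<le> N" using GPb Rr1 P_pos Qc_nn unfolding N_def by linarith
    have Hb: "\<bar>H\<bar> \<le> N" using HQb Rr1 P_pos Qc_nn unfolding N_def by linarith
    define \<theta> where "\<theta> = \<epsilon>0 * N + \<bar>fd\<bar> * (M1 * Rr)"
    have r1b: "\<bar>r1\<bar> \<le> \<theta> * \<bar>j\<bar>"
      unfolding r1_eq \<theta>_def by (rule rbound[OF E1 Gb GPb]) (use \<epsilon>0_pos in simp)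
    have r2b: "\<bar>r2\<bar> \<le> \<theta> * \<bar>j\<bar>"
      unfolding r2_eq \<theta>_def by (rule rbound[OF E1 Hb HQb]) (use \<epsilon>0_pos in simp)
    have \<theta>nn: "0 \<le> \<theta>" unfolding \<theta>_def using \<epsilon>0_pos N_pos M1_nn Rr_pos by simp
    have \<theta>le: "\<theta> \<le> \<theta>0"
    proof -
      have "\<epsilon>0 * N = \<theta>0 / 2" using N_pos by (simp add: \<epsilon>0_def)
      then show ?thesis unfolding \<theta>_def using Rr2 by linarith
    qed
    have A1: "sgl (F p) = - b * j + r1" by (simp add: r1_def)
    have A2: "Dl (F p) = - s * Dv - d * j + r2" by (simp add: r2_def)
    have main: "2 * (e1/b) * sg * sgl (F p) + 2 * j * jl (F p) + 2 * lam * Dv * Dl (F p)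
        - 2 * eps * (sgl (F p) * j + sg * jl (F p))
        \<le> - c * ((e1/b) * sg^2 + j^2 + lam * Dv^2 - 2 * eps * sg * j)"
      using der A1 A2 j' r1b r2b \<theta>nn \<theta>le by blast
    have sgp: "sgf p = sg" and Dp: "Df p = Dv" and jp: "jf p = j"
      by (simp_all add: p sgf_def sg_def Df_def Dv_def jf_def y_def z_def j_def)
    show ?thesis using main unfolding DV_def V_def sgp Dp jp .
  qed
  have "loc_asym_stable F e"
    by (rule lyap_las[OF Vd Vlow _ dec c Rr_pos Ve]) (use \<kappa> M_pos in simp)
  then show ?thesis by (simp add: F_def e_def)
qed

end
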